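(* Let $n\ge 2$, $P_{\max}>0$, $g_{i,i}>0$ and $g_{i,j}\ge 0$ for all $i,j\in\{1,\dots,n\}$. For $\mathbf P\in[0,P_{\max}]^n$ let $\mathbf R(\mathbf P)=(R_1(\mathbf P),\dots,R_n(\mathbf P))$. Define the power-control rate region $$\mathcal A=\{\mathbf r\in\mathbb R_{\ge0}^n:\ \exists\,\mathbf P\in[0,P_{\max}]^n \text{ with } \mathbf r\le \mathbf R(\mathbf P)\text{ componentwise}\}.$$ For each $i$ define the hyper-surface $\Phi_i=\{\mathbf R(\mathbf P):\mathbf P\in[0,P_{\max}]^n,\ P_i=P_{\max}\}$ and the region $$\mathcal R_i=\{\mathbf r\in\mathbb R^n_{\ge 0}: \exists\,\mathbf x\in\Phi_i,\ \mathbf r\le\mathbf x \text{ componentwise}\}.$$ Then $\mathcal A=\bigcup_{i=1}^n\mathcal R_i$. Consequently, the achievable rate region $\mathcal R=\mathrm{Conv}(\mathcal A)$ satisfies $$\mathcal R=\mathrm{Conv}\Big(\bigcup_{i=1}^n\mathcal R_i\Big).$$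
   Context: This is the $n$-user interference channel with interference treated as noise. Transmitter $i$ uses power $P_i\in[0,P_{\max}]$. The quantity $g_{i,j}$ is the channel power gain from transmitter $j$ to receiver $i$, normalized by the (unit) noise variance. The rate of pair $i$ is $$R_i(\mathbf P)=\log_2\!\left(1+\frac{g_{i,i}P_i}{1+\sum_{j\ne i}g_{i,j}P_j}\right).$$ $\mathrm{Conv}$ denotes the convex hull; taking it corresponds to time-sharing between operating points. *)

theory Defs
  imports "HOL-Analysis.Analysis"
begin

text \<open>Rate of pair i under power vector P (interference treated as noise, unit noise).\<close>
definition rate :: "('n::finite \<Rightarrow> 'n \<Rightarrow> real) \<Rightarrow> real^'n \<Rightarrow> 'n \<Rightarrow> real" where
  "rate g P i = log 2 (1 + g i i * P $ i / (1 + (\<Sum>j\<in>UNIV - {i}. g i j * P $ j)))"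

definition rate_vec :: "('n::finite \<Rightarrow> 'n \<Rightarrow> real) \<Rightarrow> real^'n \<Rightarrow> real^'n" where
  "rate_vec g P = (\<chi> i. rate g P i)"

definition power_set :: "real \<Rightarrow> (real^'n::finite) set" where
  "power_set Pmax = {P. \<forall>i. 0 \<le> P $ i \<and> P $ i \<le> Pmax}"

definition pc_region :: "('n::finite \<Rightarrow> 'n \<Rightarrow> real) \<Rightarrow> real \<Rightarrow> (real^'n) set" where
  "pc_region g Pmax = {r. (\<forall>i. 0 \<le> r $ i) \<and>
      (\<exists>P\<in>power_set Pmax. \<forall>i. r $ i \<le> rate_vec g P $ i)}"

definition Phi :: "('n::finite \<Rightarrow> 'n \<Rightarrow> real) \<Rightarrow> real \<Rightarrow> 'n \<Rightarrow> (real^'n) set" where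
  "Phi g Pmax i = {rate_vec g P | P. P \<in> power_set Pmax \<and> P $ i = Pmax}"

definition R_region :: "('n::finite \<Rightarrow> 'n \<Rightarrow> real) \<Rightarrow> real \<Rightarrow> 'n \<Rightarrow> (real^'n) set" where
  "R_region g Pmax i = {r. (\<forall>k. 0 \<le> r $ k) \<and>
      (\<exists>x\<in>Phi g Pmax i. \<forall>k. r $ k \<le> x $ k)}"

end

theory Submission
  imports Defs
begin

lemma rate_nonneg:
  assumes "\<And>i j. g i j \<ge> 0" "P \<in> power_set Pmax"
  shows "rate g P k \<ge> 0"
proof -
  have "(\<Sum>j\<in>UNIV - {k}. g k j * P $ j) \<ge> 0"
    using assms by (intro sum_nonneg) (auto simp: power_set_def)
  moreover have "g k k * P $ k \<ge> 0" using assms by (auto simp: power_set_def)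
  ultimately have "1 \<le> 1 + g k k * P $ k / (1 + (\<Sum>j\<in>UNIV - {k}. g k j * P $ j))" by simp
  thus ?thesis unfolding rate_def by simp
qed

lemma rate_scale:
  assumes "\<And>i j. g i j \<ge> 0" "P \<in> power_set Pmax" "c \<ge> 1"
  shows "rate g P k \<le> rate g (c *\<^sub>R P) k"
proof -
  define S where "S = (\<Sum>j\<in>UNIV - {k}. g k j * P $ j)"
  define a where "a = g k k * P $ k"
  have S0: "S \<ge> 0" unfolding S_def
    using assms by (intro sum_nonneg) (auto simp: power_set_def)
  have a0: "a \<ge> 0" unfolding a_def using assms by (auto simp: power_set_def)
  have cS: "(\<Sum>j\<in>UNIV - {k}. g k j * (c *\<^sub>R P) $ j) = c * S"
    unfolding S_def by (simp add: sum_distrib_left algebra_simps)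
  have ca: "g k k * (c *\<^sub>R P) $ k = c * a" unfolding a_def by simp
  have "a / (1 + S) \<le> c * a / (1 + c * S)"
  proof -
    have "a * 1 \<le> a * c" using a0 assms(3) by (intro mult_left_mono) auto
    moreover have "a * (1 + c * S) = a + c * a * S" "c * a * (1 + S) = c * a + c * a * S"
      by (simp_all add: algebra_simps)
    ultimately have "a * (1 + c * S) \<le> c * a * (1 + S)" by (simp add: mult.commute)
    moreover have "1 + S > 0" "1 + c * S > 0" using S0 assms(3) by (auto intro: add_pos_nonneg)
    ultimately show ?thesis by (simp add: divide_simps)
  qed
  moreover have "0 < 1 + a / (1 + S)" using a0 S0 by (simp add: add_pos_nonneg)
  ultimately have "log 2 (1 + a / (1 + S)) \<le> log 2 (1 + c * a / (1 + c * S))"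
    by simp
  thus ?thesis unfolding rate_def cS ca S_def[symmetric] a_def[symmetric] .
qed

theorem theorem1:
  fixes g :: "'n::finite \<Rightarrow> 'n \<Rightarrow> real" and Pmax :: real
  assumes "CARD('n) \<ge> 2"
    and "Pmax > 0"
    and "\<And>i. g i i > 0"
    and "\<And>i j. g i j \<ge> 0"
  shows "pc_region g Pmax = (\<Union>i. R_region g Pmax i)
    \<and> convex hull (pc_region g Pmax) = convex hull (\<Union>i. R_region g Pmax i)"
proof -
  have eq: "pc_region g Pmax = (\<Union>i. R_region g Pmax i)"
  proof
    show "(\<Union>i. R_region g Pmax i) \<subseteq> pc_region g Pmax"
    proof
      fix r assume "r \<in> (\<Union>i. R_region g Pmax i)"
      then obtain i x where r0: "\<forall>k. 0 \<le> r $ k" and x: "x \<in> Phi g Pmax i"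
        and rx: "\<forall>k. r $ k \<le> x $ k" unfolding R_region_def by blast
      from x obtain P where "x = rate_vec g P" "P \<in> power_set Pmax" unfolding Phi_def by blast
      thus "r \<in> pc_region g Pmax" using r0 rx unfolding pc_region_def by blast
    qed
  next
    show "pc_region g Pmax \<subseteq> (\<Union>i. R_region g Pmax i)"
    proof
      fix r assume "r \<in> pc_region g Pmax"
      then obtain P where r0: "\<forall>i. 0 \<le> r $ i" and P: "P \<in> power_set Pmax"
        and rP: "\<forall>i. r $ i \<le> rate_vec g P $ i"
        unfolding pc_region_def by auto
      define m where "m = Max (range (\<lambda>k. P $ k))"
      obtain i where im: "P $ i = m"
        proof -
        have "m \<in> range (\<lambda>k. P $ k)" unfolding m_def by (rule Max_in) auto
        thus ?thesis using that by auto
      qed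
      have mge: "\<And>k. P $ k \<le> m" unfolding m_def by simp
      have m0: "m \<ge> 0" using P im by (auto simp: power_set_def)
      have mle: "m \<le> Pmax" using P im by (auto simp: power_set_def)
      show "r \<in> (\<Union>i. R_region g Pmax i)"
      proof (cases "m = 0")
        case True
        define Q :: "real^'n" where "Q = (\<chi> k. Pmax)"
        have Q: "Q \<in> power_set Pmax" using assms(2) by (auto simp: Q_def power_set_def)
        have "\<And>k. P $ k = 0" using mge True P unfolding power_set_def by (simp add: order_antisym)
        hence "\<And>k. rate g P k = 0" by (simp add: rate_def)
        hence "\<And>k. r $ k \<le> rate_vec g Q $ k"
          proof -
          fix k
          have "r $ k \<le> rate g P k" using rP by (simp add: rate_vec_def)
          also have "\<dots> \<le> rate g Q k" using \<open>\<And>k. rate g P k = 0\<close> rate_nonneg[OF assms(4) Q] by simp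
          finally show "r $ k \<le> rate_vec g Q $ k" by (simp add: rate_vec_def)
        qed
        moreover have "rate_vec g Q \<in> Phi g Pmax i" using Q by (auto simp: Phi_def Q_def)
        ultimately show ?thesis using r0 unfolding R_region_def by blast
      next
        case False
        hence mp: "m > 0" using m0 by simp
        define c where "c = Pmax / m"
        have c1: "c \<ge> 1" using mle mp by (simp add: c_def)
        define Q where "Q = c *\<^sub>R P"
        have Q: "Q \<in> power_set Pmax"
          unfolding power_set_def Q_def
        proof (intro CollectI allI conjI)
          fix k
          show "0 \<le> (c *\<^sub>R P) $ k" using P c1 by (simp add: power_set_def)
          have "c * P $ k \<le> c * m" using mge c1 by (intro mult_left_mono) auto
          also have "c * m = Pmax" using mp by (simp add: c_def)
          finally show "(c *\<^sub>R P) $ k \<le> Pmax" by simp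
        qed
        have Qi: "Q $ i = Pmax" using im mp by (simp add: Q_def c_def)
        have "\<And>k. r $ k \<le> rate_vec g Q $ k"
          unfolding Q_def
        proof -
          fix k
          have "r $ k \<le> rate g P k" using rP by (simp add: rate_vec_def)
          also have "\<dots> \<le> rate g (c *\<^sub>R P) k" by (rule rate_scale[OF assms(4) P c1])
          finally show "r $ k \<le> rate_vec g (c *\<^sub>R P) $ k" by (simp add: rate_vec_def)
        qed
        moreover have "rate_vec g Q \<in> Phi g Pmax i" using Q Qi by (auto simp: Phi_def)
        ultimately show ?thesis using r0 unfolding R_region_def by blast
      qed
    qed
  qed
  thus ?thesis by simp
qed

end
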